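(* Let $k\ge 2$ and let $H$ be a hypergraph on vertex set $V$ with $R(H)=\{1,k\}$ whose $1$-edges are exactly all singletons $\{v\}$, $v\in V$, and let $H^k$ denote the $k$-uniform hypergraph of $k$-edges of $H$. Then \[\pi(H)=\begin{cases}1+\pi(H^k) & \text{if } \pi(H^k)\ge 1-\frac1k,\\[2pt] 1+\left(\frac{1}{k(1-\pi(H^k))}\right)^{1/(k-1)}\left(1-\frac1k\right) & \text{otherwise.}\end{cases}\]
   Context: A hypergraph $H=(V,E)$ has finite vertex set $V$ and edge set $E\subseteq 2^V$; $R(H)=\{|F|:F\in E\}$. $H_1\subseteq H_2$ means there is an injective $f\colon V(H_1)\to V(H_2)$ with $f(F)\in E(H_2)$ for all $F\in E(H_1)$. For $G$ on $n$ vertices, $h_n(G)=\sum_{F\in E(G)}1/\binom{n}{|F|}$; $\pi_n(H)=\max\{h_n(G): G\text{ on } n \text{ vertices}, R(G)\subseteq R(H), H\not\subseteq G\}$ and $\pi(H)=\lim_n\pi_n(H)$. For a $k$-uniform hypergraph this $\pi$ is the usual Turán density $\lim_n \mathrm{ex}(n,H^k)/\binom nk$. *)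

theory Defs
  imports Complex_Main
begin

type_synonym 'a hypergraph = "'a set \<times> 'a set set"

definition hypergraph :: "'a hypergraph \<Rightarrow> bool" where
  "hypergraph H \<longleftrightarrow> finite (fst H) \<and> snd H \<subseteq> Pow (fst H)"

definition Rset :: "'a hypergraph \<Rightarrow> nat set" where
  "Rset H = card ` snd H"

definition hsub :: "'a hypergraph \<Rightarrow> 'b hypergraph \<Rightarrow> bool" where
  "hsub H1 H2 \<longleftrightarrow> (\<exists>f. inj_on f (fst H1) \<and> f ` fst H1 \<subseteq> fst H2 \<and>
                        (\<forall>F\<in>snd H1. f ` F \<in> snd H2))"

definition lubell :: "nat \<Rightarrow> nat set set \<Rightarrow> real" where
  "lubell n E = (\<Sum>F\<in>E. 1 / real (n choose card F))"

definition pi_n :: "'a hypergraph \<Rightarrow> nat \<Rightarrow> real" where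
  "pi_n H n = Max {lubell n E | E. E \<subseteq> Pow {0..<n} \<and> Rset ({0..<n}, E) \<subseteq> Rset H
                                   \<and> \<not> hsub H ({0..<n}, E)}"

definition pi_dens :: "'a hypergraph \<Rightarrow> real" where
  "pi_dens H = lim (pi_n H)"

definition kpart :: "nat \<Rightarrow> 'a hypergraph \<Rightarrow> 'a hypergraph" where
  "kpart k H = (fst H, {F \<in> snd H. card F = k})"

end

theory Submission
  imports Defs
begin


lemma tangent_pow:
  fixes a x :: real
  assumes "a > 0" "x \<ge> 0"
  shows "a^k + real k * a^(k-1) * (x - a) \<le> x^k"
proof (cases k)
  case 0 then show ?thesis by simp
next
  case (Suc m)
  have "-1 \<le> x/a - 1" using assms by simp
  from Bernoulli_inequality[OF this, of k]
  have "1 + real k * (x/a - 1) \<le> (x/a)^k" by simp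
  hence "a^k * (1 + real k * (x/a - 1)) \<le> a^k * (x/a)^k"
    using assms by (intro mult_left_mono) auto
  also have "a^k * (x/a)^k = x^k" using assms by (simp add: power_divide)
  also have "a^k * (1 + real k * (x/a - 1)) = a^k + real k * a^(k-1) * (x - a)"
    using assms Suc by (simp add: field_simps)
  finally show ?thesis .
qed

lemma pow_diff_le:
  fixes a b :: real
  assumes "0 \<le> b" "b \<le> a" "a \<le> 1"
  shows "a^k - b^k \<le> real k * (a - b)"
proof (cases "a = 0")
  case True then show ?thesis using assms by auto
next
  case False
  hence "a > 0" using assms by auto
  from tangent_pow[OF this assms(1), of k]
  have "a^k + real k * a^(k-1) * (b - a) \<le> b^k" .
  moreover have "a^(k-1) \<le> 1" using assms by (simp add: power_le_one)
  moreover have "real k * (a - b) * a^(k-1) \<le> real k * (a - b) * 1"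
    using calculation(2) assms by (intro mult_left_mono) auto
  ultimately show ?thesis by (simp add: algebra_simps)
qed

lemma binom_ratio_prod:
  assumes "k \<le> s" "s \<le> n"
  shows "real (s choose k) / real (n choose k) = (\<Prod>i = 0..<k. real (s - i) / real (n - i))"
proof -
  have "real (s choose k) / real (n choose k) =
      (\<Prod>i = 0..<k. real (s - i) / real (k - i)) / (\<Prod>i = 0..<k. real (n - i) / real (k - i))"
    using assms by (simp add: binomial_altdef_of_nat)
  also have "\<dots> = (\<Prod>i = 0..<k. (real (s - i) / real (k - i)) / (real (n - i) / real (k - i)))"
    by (simp add: prod_dividef)
  also have "\<dots> = (\<Prod>i = 0..<k. real (s - i) / real (n - i))"
    by (intro prod.cong) auto
  finally show ?thesis .
qed

lemma binom_ratio:
  assumes "s \<le> n" "k \<le> n" "k \<ge> 1"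
  shows "0 \<le> real (s choose k) / real (n choose k)"
    and "real (s choose k) / real (n choose k) \<le> (real s / real n)^k"
    and "(real s / real n)^k - real k * real k / real n \<le> real (s choose k) / real (n choose k)"
proof -
  have n0: "real n > 0" using assms by auto
  have x1: "real s / real n \<le> 1" "0 \<le> real s / real n" using assms n0 by auto
  show "0 \<le> real (s choose k) / real (n choose k)" by simp
  show "real (s choose k) / real (n choose k) \<le> (real s / real n)^k"
  proof (cases "k \<le> s")
    case True
    have "(\<Prod>i = 0..<k. real (s - i) / real (n - i)) \<le> (\<Prod>i = 0..<k. real s / real n)"
    proof (intro prod_mono conjI)
      fix i assume i: "i \<in> {0..<k}"
      show "0 \<le> real (s - i) / real (n - i)" by simp
      have "real (s - i) * real n \<le> real s * real (n - i)"
        using i True assms by (simp add: of_nat_diff algebra_simps mult_left_mono)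
      thus "real (s - i) / real (n - i) \<le> real s / real n"
        using i assms n0 by (simp add: divide_simps)
    qed
    thus ?thesis using binom_ratio_prod[OF True assms(1)] by simp
  next
    case False then show ?thesis using x1 by (simp add: binomial_eq_0)
  qed
  show "(real s / real n)^k - real k * real k / real n \<le> real (s choose k) / real (n choose k)"
  proof (cases "k \<le> s")
    case True
    define y where "y = (real s - real k) / real n"
    have y0: "0 \<le> y" "y \<le> real s / real n" using True n0 by (auto simp: y_def divide_simps)
    have "(\<Prod>i = 0..<k. y) \<le> (\<Prod>i = 0..<k. real (s - i) / real (n - i))"
    proof (intro prod_mono conjI)
      fix i assume i: "i \<in> {0..<k}"
      show "0 \<le> y" by fact
      have "(real s - real k) * real (n - i) \<le> real (s - i) * real n"
      proof -
        have "(real s - real k) * real (n - i) \<le> (real s - real k) * real n"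
          using True by (intro mult_left_mono) auto
        also have "\<dots> \<le> real (s - i) * real n"
          using i True by (intro mult_right_mono) (auto simp: of_nat_diff)
        finally show ?thesis .
      qed
      thus "y \<le> real (s - i) / real (n - i)"
        using i assms n0 by (simp add: y_def divide_simps)
    qed
    hence "y^k \<le> real (s choose k) / real (n choose k)"
      using binom_ratio_prod[OF True assms(1)] by simp
    moreover have "(real s / real n)^k - y^k \<le> real k * (real s / real n - y)"
      using pow_diff_le[OF y0 x1(1)] .
    moreover have "real s / real n - y = real k / real n" by (simp add: y_def diff_divide_distrib)
    ultimately show ?thesis by simp
  next
    case False
    have "(real s / real n)^k \<le> real s / real n"
      using x1 assms by (simp add: power_le_one power_decreasing[of 1 k, simplified])
    also have "\<dots> \<le> real k / real n" using False n0 by (simp add: divide_right_mono)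
    also have "\<dots> \<le> real k * real k / real n" using assms n0 by (simp add: divide_right_mono)
    finally show ?thesis using False by (simp add: binomial_eq_0)
  qed
qed



lemma hsub_mono:
  assumes "hsub H1 (A, E1)" "A \<subseteq> B" "E1 \<subseteq> E2"
  shows "hsub H1 (B, E2)"
  using assms unfolding hsub_def by fastforce

lemma finite_lub_set: "finite {lubell n E | E. E \<subseteq> Pow {0..<n} \<and> P E}"
proof -
  have "{lubell n E | E. E \<subseteq> Pow {0..<n} \<and> P E} \<subseteq> lubell n ` Pow (Pow {0..<n})" by auto
  thus ?thesis by (rule finite_subset) auto
qed

lemma lubell_unif:
  assumes "\<forall>F\<in>E. card F = k"
  shows "lubell n E = real (card E) / real (n choose k)"
proof -
  have "lubell n E = (\<Sum>F\<in>E. 1 / real (n choose k))"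
    unfolding lubell_def using assms by (intro sum.cong) auto
  thus ?thesis by simp
qed

lemma card_unif_le:
  assumes "E \<subseteq> Pow W" "finite W" "\<forall>F\<in>E. card F = k"
  shows "card E \<le> card W choose k"
proof -
  have "E \<subseteq> {B. B \<subseteq> W \<and> card B = k}" using assms by auto
  hence "card E \<le> card {B. B \<subseteq> W \<and> card B = k}"
    by (rule card_mono[rotated]) (use assms in auto)
  thus ?thesis using n_subsets[OF assms(2)] by simp
qed

context
  fixes H :: "'a hypergraph" and k :: nat
  assumes k2: "k \<ge> 2" and hg: "hypergraph H" and RH: "Rset H = {1, k}"
begin

lemma Hk_snd: "snd (kpart k H) = {F \<in> snd H. card F = k}" and Hk_fst: "fst (kpart k H) = fst H"
  by (auto simp: kpart_def)

lemma Hk_edge: "\<exists>F. F \<in> snd (kpart k H)"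
proof -
  have "k \<in> card ` snd H" using RH unfolding Rset_def by auto
  thus ?thesis unfolding Hk_snd by auto
qed

lemma Rset_Hk: "Rset (kpart k H) = {k}"
  using Hk_edge unfolding Rset_def Hk_snd by auto

lemma not_hsub_empty: "\<not> hsub (kpart k H) (A, {})"
  using Hk_edge unfolding hsub_def by auto

lemma memb_k_iff:
  "(E \<subseteq> Pow {0..<n} \<and> Rset ({0..<n}, E) \<subseteq> Rset (kpart k H) \<and> \<not> hsub (kpart k H) ({0..<n}, E))
   \<longleftrightarrow> (E \<subseteq> Pow {0..<n} \<and> (\<forall>F\<in>E. card F = k) \<and> \<not> hsub (kpart k H) ({0..<n}, E))"
  using Rset_Hk unfolding Rset_def by auto

lemma T_set_eq: "{lubell n E | E. E \<subseteq> Pow {0..<n} \<and> Rset ({0..<n}, E) \<subseteq> Rset (kpart k H)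
                                   \<and> \<not> hsub (kpart k H) ({0..<n}, E)}
   = {lubell n E | E. E \<subseteq> Pow {0..<n} \<and> ((\<forall>F\<in>E. card F = k) \<and> \<not> hsub (kpart k H) ({0..<n}, E))}"
  by (simp only: memb_k_iff)

lemma T_def': "pi_n (kpart k H) n = Max {lubell n E | E. E \<subseteq> Pow {0..<n} \<and> ((\<forall>F\<in>E. card F = k) \<and> \<not> hsub (kpart k H) ({0..<n}, E))}"
  unfolding pi_n_def T_set_eq ..

lemma T_nonempty: "{lubell n E | E. E \<subseteq> Pow {0..<n} \<and> ((\<forall>F\<in>E. card F = k) \<and> \<not> hsub (kpart k H) ({0..<n}, E))} \<noteq> {}"
  using not_hsub_empty by blast

lemma T_ge:
  assumes "E \<subseteq> Pow {0..<n}" "\<forall>F\<in>E. card F = k" "\<not> hsub (kpart k H) ({0..<n}, E)"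
  shows "lubell n E \<le> pi_n (kpart k H) n"
  unfolding T_def' by (rule Max_ge[OF finite_lub_set]) (use assms in blast)

lemma T_attained:
  "\<exists>E. E \<subseteq> Pow {0..<n} \<and> (\<forall>F\<in>E. card F = k) \<and> \<not> hsub (kpart k H) ({0..<n}, E)
      \<and> lubell n E = pi_n (kpart k H) n"
proof -
  have "pi_n (kpart k H) n \<in> {lubell n E | E. E \<subseteq> Pow {0..<n} \<and> ((\<forall>F\<in>E. card F = k) \<and> \<not> hsub (kpart k H) ({0..<n}, E))}"
    unfolding T_def' by (rule Max_in[OF finite_lub_set T_nonempty])
  then obtain E where "pi_n (kpart k H) n = lubell n E" "E \<subseteq> Pow {0..<n}" "\<forall>F\<in>E. card F = k"
     "\<not> hsub (kpart k H) ({0..<n}, E)" by blast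
  thus ?thesis by (intro exI[of _ E]) simp
qed

lemma T_obtain:
  obtains E where "E \<subseteq> Pow {0..<n}" "\<forall>F\<in>E. card F = k" "\<not> hsub (kpart k H) ({0..<n}, E)"
      "lubell n E = pi_n (kpart k H) n"
  using T_attained[of n] by (elim exE conjE) (rule that)

lemma T_nonneg: "0 \<le> pi_n (kpart k H) n"
proof -
  have "lubell n {} \<le> pi_n (kpart k H) n" by (rule T_ge) (auto simp: not_hsub_empty)
  thus ?thesis by (simp add: lubell_def)
qed

lemma T_le1: "pi_n (kpart k H) n \<le> 1"
proof -
  obtain E where E: "E \<subseteq> Pow {0..<n}" "\<forall>F\<in>E. card F = k" "\<not> hsub (kpart k H) ({0..<n}, E)" "lubell n E = pi_n (kpart k H) n"
    by (rule T_obtain)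
  have "card E \<le> n choose k" using card_unif_le[OF E(1) _ E(2)] by simp
  hence "real (card E) / real (n choose k) \<le> 1"
    by (cases "n choose k = 0") (auto simp: divide_simps)
  thus ?thesis using E lubell_unif[OF E(2)] by simp
qed

lemma relabel:
  assumes W: "finite W" and E: "E \<subseteq> Pow W" "\<forall>F\<in>E. card F = k" "\<not> hsub (kpart k H) (W, E)"
  shows "real (card E) \<le> pi_n (kpart k H) (card W) * real (card W choose k)"
proof -
  define s where "s = card W"
  obtain h where h: "bij_betw h {0..<s} W" using ex_bij_betw_nat_finite[OF W] unfolding s_def by blast
  define g where "g = inv_into {0..<s} h"
  have g: "bij_betw g W {0..<s}" unfolding g_def by (rule bij_betw_inv_into[OF h])
  have hg: "\<And>x. x \<in> W \<Longrightarrow> h (g x) = x" unfolding g_def using h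
    by (meson bij_betw_inv_into_right)
  define E' where "E' = image g ` E"
  have E'1: "E' \<subseteq> Pow {0..<s}" using g E(1) unfolding E'_def bij_betw_def by auto
  have injE: "inj_on (image g) E"
    using inj_on_image_Pow[of g W] g E(1) unfolding bij_betw_def by (meson inj_on_subset)
  have cardE': "card E' = card E" unfolding E'_def using injE by (simp add: card_image)
  have E'2: "\<forall>F\<in>E'. card F = k"
  proof
    fix F assume "F \<in> E'"
    then obtain F0 where F0: "F0 \<in> E" "F = g ` F0" unfolding E'_def by auto
    have "inj_on g F0" using g E(1) F0(1) unfolding bij_betw_def by (meson PowD in_mono inj_on_subset)
    thus "card F = k" using F0 E(2) by (simp add: card_image)
  qed
  have E'3: "\<not> hsub (kpart k H) ({0..<s}, E')"
  proof
    assume "hsub (kpart k H) ({0..<s}, E')"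
    then obtain f where f: "inj_on f (fst (kpart k H))" "f ` fst (kpart k H) \<subseteq> {0..<s}"
       "\<forall>F\<in>snd (kpart k H). f ` F \<in> E'" unfolding hsub_def by auto
    have "hsub (kpart k H) (W, E)" unfolding hsub_def
    proof (intro exI[of _ "h \<circ> f"] conjI ballI)
      have "inj_on h (f ` fst (kpart k H))" using h f(2) unfolding bij_betw_def by (meson inj_on_subset)
      thus "inj_on (h \<circ> f) (fst (kpart k H))" using f(1) by (simp add: comp_inj_on)
      show "(h \<circ> f) ` fst (kpart k H) \<subseteq> fst (W, E)" using h f(2) unfolding bij_betw_def by auto
      fix F assume "F \<in> snd (kpart k H)"
      then obtain F0 where F0: "F0 \<in> E" "f ` F = g ` F0" using f(3) unfolding E'_def by auto
      have "(h \<circ> f) ` F = h ` g ` F0" using F0 by (metis image_comp)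
      also have "\<dots> = F0" using hg E(1) F0(1) by (force simp: image_image)
      finally show "(h \<circ> f) ` F \<in> snd (W, E)" using F0 by simp
    qed
    thus False using E(3) by simp
  qed
  have lub: "lubell s E' \<le> pi_n (kpart k H) s" by (rule T_ge[OF E'1 E'2 E'3])
  show ?thesis
  proof (cases "s choose k = 0")
    case True
    hence "s < k" by (simp add: binomial_eq_0_iff)
    have "E' = {}"
    proof (rule ccontr)
      assume "E' \<noteq> {}"
      then obtain F where "F \<in> E'" by auto
      hence "card F = k" "F \<subseteq> {0..<s}" using E'1 E'2 by auto
      hence "k \<le> s" by (metis card_atLeastLessThan card_mono finite_atLeastLessThan diff_zero)
      thus False using \<open>s < k\<close> by simp
    qed
    hence "card E = 0" using cardE' by simp
    thus ?thesis using True s_def T_nonneg by simp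
  next
    case False
    have Cp: "real (s choose k) > 0" using False by simp
    have "real (card E) / real (s choose k) \<le> pi_n (kpart k H) s"
      using lub lubell_unif[OF E'2] cardE' by simp
    hence "real (card E) \<le> pi_n (kpart k H) s * real (s choose k)"
      using Cp by (simp add: pos_divide_le_eq)
    thus ?thesis unfolding s_def .
  qed
qed

lemma double_count:
  assumes "finite E" "E \<subseteq> Pow {0..<m}" "\<forall>F\<in>E. card F = k"
  shows "(\<Sum>v\<in>{0..<m}. card {F\<in>E. v \<notin> F}) = card E * (m - k)"
proof -
  have "(\<Sum>v\<in>{0..<m}. card {F\<in>E. v \<notin> F}) = (\<Sum>v\<in>{0..<m}. \<Sum>F\<in>E. if v \<notin> F then 1 else 0)"
    using assms(1) by (intro sum.cong refl) (simp add: sum.inter_filter[symmetric])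
  also have "\<dots> = (\<Sum>F\<in>E. \<Sum>v\<in>{0..<m}. if v \<notin> F then 1 else 0)" by (rule sum.swap)
  also have "\<dots> = (\<Sum>F\<in>E. m - k)"
  proof (intro sum.cong refl)
    fix F assume F: "F \<in> E"
    have "(\<Sum>v\<in>{0..<m}. if v \<notin> F then 1 else 0) = card {v\<in>{0..<m}. v \<notin> F}"
      by (simp add: sum.inter_filter[symmetric])
    also have "{v\<in>{0..<m}. v \<notin> F} = {0..<m} - F" by auto
    also have "card ({0..<m} - F) = m - k" using F assms
      by (subst card_Diff_subset) (auto intro: finite_subset)
    finally show "(\<Sum>v\<in>{0..<m}. if v \<notin> F then 1 else 0) = m - k" .
  qed
  also have "\<dots> = card E * (m - k)" by simp
  finally show ?thesis .
qed

lemma T_mono: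
  assumes "k \<le> n"
  shows "pi_n (kpart k H) (Suc n) \<le> pi_n (kpart k H) n"
proof -
  obtain E where E: "E \<subseteq> Pow {0..<Suc n}" "\<forall>F\<in>E. card F = k" "\<not> hsub (kpart k H) ({0..<Suc n}, E)"
     "lubell (Suc n) E = pi_n (kpart k H) (Suc n)" by (rule T_obtain)
  have finE: "finite E" using E(1) by (rule finite_subset) auto
  have each: "real (card {F\<in>E. v \<notin> F}) \<le> pi_n (kpart k H) n * real (n choose k)"
    if v: "v \<in> {0..<Suc n}" for v
  proof -
    have c: "card ({0..<Suc n} - {v}) = n" using v by simp
    have "\<not> hsub (kpart k H) ({0..<Suc n} - {v}, {F\<in>E. v \<notin> F})"
      using E(3) hsub_mono[of "kpart k H" "{0..<Suc n} - {v}" "{F\<in>E. v \<notin> F}" "{0..<Suc n}" E] by auto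
    from relabel[OF _ _ _ this] c E(1,2)
    show ?thesis by auto
  qed
  have ds: "(\<Sum>v\<in>{0..<Suc n}. card {F\<in>E. v \<notin> F}) = card E * (Suc n - k)"
    by (rule double_count[OF finE E(1,2)])
  have "real (\<Sum>v\<in>{0..<Suc n}. card {F\<in>E. v \<notin> F}) \<le> (\<Sum>v\<in>{0..<Suc n}. pi_n (kpart k H) n * real (n choose k))"
    unfolding of_nat_sum by (rule sum_mono) (rule each)
  also have "\<dots> = real (Suc n) * (pi_n (kpart k H) n * real (n choose k))"
    by simp
  finally have "real (card E * (Suc n - k)) \<le> real (Suc n) * (pi_n (kpart k H) n * real (n choose k))"
    by (simp only: ds)
  also have "real (Suc n) * (pi_n (kpart k H) n * real (n choose k))
      = pi_n (kpart k H) n * real ((Suc n - k) * (Suc n choose k))"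
    using binomial_absorb_comp[of "Suc n" k] by (simp add: algebra_simps)
  finally have "real (card E) * real (Suc n - k) \<le> (pi_n (kpart k H) n * real (Suc n choose k)) * real (Suc n - k)"
    by (simp only: of_nat_mult mult_ac)
  moreover have "real (Suc n - k) > 0" using assms by simp
  ultimately have "real (card E) \<le> pi_n (kpart k H) n * real (Suc n choose k)" by simp
  moreover have "real (Suc n choose k) > 0" using assms by simp
  ultimately have "real (card E) / real (Suc n choose k) \<le> pi_n (kpart k H) n" by (simp add: divide_simps)
  thus ?thesis using E(4) lubell_unif[OF E(2)] by simp
qed

lemma T_conv: "pi_n (kpart k H) \<longlonglongrightarrow> pi_dens (kpart k H)"
proof -
  let ?T = "pi_n (kpart k H)"
  have dec: "decseq (\<lambda>n. ?T (n + k))"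
    by (rule decseq_SucI) (simp add: T_mono)
  have "convergent (\<lambda>n. ?T (n + k))"
  proof (rule Bseq_monoseq_convergent)
    show "Bseq (\<lambda>n. ?T (n + k))" using T_nonneg T_le1 by (intro BseqI'[of _ 1]) auto
    show "monoseq (\<lambda>n. ?T (n + k))" using dec by (simp add: monoseq_def decseq_def)
  qed
  then obtain L where "(\<lambda>n. ?T (n + k)) \<longlonglongrightarrow> L" by (auto simp: convergent_def)
  hence "?T \<longlonglongrightarrow> L" by (simp add: LIMSEQ_offset[of ?T k L])
  thus ?thesis unfolding pi_dens_def using limI by fastforce
qed

end


lemma card_out:
  assumes "S \<subseteq> {0..<n::nat}"
  shows "card ({F. F \<subseteq> {0..<n} \<and> card F = k} - {F. F \<subseteq> S \<and> card F = k}) = (n choose k) - (card S choose k)"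
    and "card S choose k \<le> n choose k"
proof -
  have fS: "finite S" using assms finite_subset by blast
  have sub: "{F. F \<subseteq> S \<and> card F = k} \<subseteq> {F. F \<subseteq> {0..<n} \<and> card F = k}" using assms by auto
  have fin: "finite {F. F \<subseteq> {0..<n} \<and> card F = k}" by (rule finite_subset[of _ "Pow {0..<n}"]) auto
  show "card ({F. F \<subseteq> {0..<n} \<and> card F = k} - {F. F \<subseteq> S \<and> card F = k}) = (n choose k) - (card S choose k)"
    using card_Diff_subset[OF finite_subset[OF sub fin] sub] n_subsets[OF fS, of k] n_subsets[of "{0..<n}" k] by simp
  show "card S choose k \<le> n choose k"
    using card_mono[OF fin sub] n_subsets[OF fS, of k] n_subsets[of "{0..<n}" k] by simp
qed

context
  fixes H :: "'a hypergraph" and k :: nat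
  assumes k2: "k \<ge> 2" and hg: "hypergraph H" and RH: "Rset H = {1, k}"
    and sing: "{F \<in> snd H. card F = 1} = (\<lambda>v. {v}) ` fst H"
begin

lemma edge_cases: "F \<in> snd H \<Longrightarrow> card F = 1 \<or> card F = k"
  using RH unfolding Rset_def by auto

lemma sing_edge: "v \<in> fst H \<Longrightarrow> {v} \<in> snd H"
  using sing by auto

lemma edge_sub: "F \<in> snd H \<Longrightarrow> F \<subseteq> fst H"
  using hg unfolding hypergraph_def by auto

lemma one_edge: "F \<in> snd H \<Longrightarrow> card F = 1 \<Longrightarrow> \<exists>v\<in>fst H. F = {v}"
  using sing by auto

lemma PiH_attained:
  "\<exists>E. E \<subseteq> Pow {0..<n} \<and> Rset ({0..<n}, E) \<subseteq> Rset H \<and> \<not> hsub H ({0..<n}, E) \<and> lubell n E = pi_n H n"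
proof -
  have ne: "{lubell n E | E. E \<subseteq> Pow {0..<n} \<and> (Rset ({0..<n}, E) \<subseteq> Rset H \<and> \<not> hsub H ({0..<n}, E))} \<noteq> {}"
  proof -
    have "\<not> hsub H ({0..<n}, {})"
    proof -
      have "k \<in> card ` snd H" using RH unfolding Rset_def by auto
      then obtain F where "F \<in> snd H" by auto
      thus ?thesis unfolding hsub_def by auto
    qed
    thus ?thesis by (auto simp: Rset_def)
  qed
  have "pi_n H n \<in> {lubell n E | E. E \<subseteq> Pow {0..<n} \<and> (Rset ({0..<n}, E) \<subseteq> Rset H \<and> \<not> hsub H ({0..<n}, E))}"
    unfolding pi_n_def by (rule Max_in[OF finite_lub_set ne])
  then obtain E where "pi_n H n = lubell n E" "E \<subseteq> Pow {0..<n}" "Rset ({0..<n}, E) \<subseteq> Rset H"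
     "\<not> hsub H ({0..<n}, E)" by blast
  thus ?thesis by (intro exI[of _ E]) simp
qed

lemma PiH_obtain:
  obtains E where "E \<subseteq> Pow {0..<n}" "Rset ({0..<n}, E) \<subseteq> Rset H" "\<not> hsub H ({0..<n}, E)" "lubell n E = pi_n H n"
  using PiH_attained[of n] by (elim exE conjE) (rule that)

lemma PiH_ge:
  assumes "E \<subseteq> Pow {0..<n}" "Rset ({0..<n}, E) \<subseteq> Rset H" "\<not> hsub H ({0..<n}, E)"
  shows "lubell n E \<le> pi_n H n"
  unfolding pi_n_def by (rule Max_ge[OF finite_lub_set]) (use assms in blast)

lemmas relabel' = relabel[OF k2 hg RH]
lemmas T_obtain' = T_obtain[OF k2 hg RH]
lemmas T_nonneg' = T_nonneg[OF k2 hg RH]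
lemmas T_le1' = T_le1[OF k2 hg RH]

lemma PiH_ub:
  assumes kn: "k \<le> n"
  shows "\<exists>s\<le>n. pi_n H n \<le> real s / real n + 1 - (1 - pi_n (kpart k H) s) * (real (s choose k) / real (n choose k))"
proof -
  obtain E where E: "E \<subseteq> Pow {0..<n}" "Rset ({0..<n}, E) \<subseteq> Rset H" "\<not> hsub H ({0..<n}, E)"
     "lubell n E = pi_n H n" by (rule PiH_obtain)
  have cE: "\<forall>F\<in>E. card F = 1 \<or> card F = k" using E(2) RH unfolding Rset_def by auto
  have finE: "finite E" using E(1) by (rule finite_subset) auto
  define S where "S = {v\<in>{0..<n}. {v} \<in> E}"
  have Ssub: "S \<subseteq> {0..<n}" unfolding S_def by auto
  hence finS: "finite S" by (rule finite_subset) auto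
  define s where "s = card S"
  have sn: "s \<le> n" unfolding s_def using card_mono[OF _ Ssub] by simp
  define E1 where "E1 = {F\<in>E. card F = 1}"
  define Ein where "Ein = {F\<in>E. card F = k \<and> F \<subseteq> S}"
  define Eout where "Eout = {F\<in>E. card F = k \<and> \<not> F \<subseteq> S}"
  have k1: "k \<noteq> 1" using k2 by simp
  have Eun: "E = E1 \<union> Ein \<union> Eout" unfolding E1_def Ein_def Eout_def using cE by auto
  have E1eq: "E1 = (\<lambda>v. {v}) ` S"
  proof
    show "E1 \<subseteq> (\<lambda>v. {v}) ` S"
    proof
      fix F assume "F \<in> E1"
      hence F: "F \<in> E" "card F = 1" unfolding E1_def by auto
      then obtain v where v: "F = {v}" by (meson card_1_singletonE)
      have "v \<in> S" using F v E(1) unfolding S_def by auto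
      thus "F \<in> (\<lambda>v. {v}) ` S" using v by auto
    qed
    show "(\<lambda>v. {v}) ` S \<subseteq> E1" unfolding S_def E1_def by auto
  qed
  have fin1: "finite E1" "finite Ein" "finite Eout" using finE unfolding E1_def Ein_def Eout_def by auto
  have lubE: "lubell n E = lubell n E1 + lubell n Ein + lubell n Eout"
    unfolding Eun lubell_def using fin1 k1
    by (subst sum.union_disjoint, simp_all, (auto simp: E1_def Ein_def Eout_def)[1],
        subst sum.union_disjoint, auto simp: E1_def Ein_def Eout_def)
  have l1: "lubell n E1 = real s / real n"
  proof -
    have "lubell n E1 = real (card E1) / real (n choose 1)"
      by (rule lubell_unif) (simp add: E1_def)
    moreover have "card E1 = s" unfolding E1eq s_def by (rule card_image) (simp add: inj_on_def)
    ultimately show ?thesis by simp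
  qed
  have l2: "lubell n Ein = real (card Ein) / real (n choose k)" by (rule lubell_unif) (simp add: Ein_def)
  have l3: "lubell n Eout = real (card Eout) / real (n choose k)" by (rule lubell_unif) (simp add: Eout_def)
  have nhs: "\<not> hsub (kpart k H) (S, Ein)"
  proof
    assume "hsub (kpart k H) (S, Ein)"
    then obtain f where f: "inj_on f (fst H)" "f ` fst H \<subseteq> S" "\<forall>F\<in>snd (kpart k H). f ` F \<in> Ein"
      unfolding hsub_def kpart_def by auto
    have "hsub H ({0..<n}, E)" unfolding hsub_def
    proof (intro exI[of _ f] conjI ballI)
      show "inj_on f (fst H)" by fact
      show "f ` fst H \<subseteq> fst ({0..<n}, E)" using f(2) Ssub by auto
      fix F assume F: "F \<in> snd H"
      show "f ` F \<in> snd ({0..<n}, E)"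
      proof (cases "card F = 1")
        case True
        then obtain v where v: "v \<in> fst H" "F = {v}" using one_edge F by blast
        have "f v \<in> S" using f(2) v by auto
        thus ?thesis using v unfolding S_def by auto
      next
        case False
        hence "card F = k" using edge_cases F by auto
        hence "F \<in> snd (kpart k H)" using F by (simp add: kpart_def)
        thus ?thesis using f(3) unfolding Ein_def by auto
      qed
    qed
    thus False using E(3) by simp
  qed
  have cin: "real (card Ein) \<le> pi_n (kpart k H) s * real (s choose k)"
    unfolding s_def by (rule relabel'[OF finS _ _ nhs]) (auto simp: Ein_def)
  have "Eout \<subseteq> {F. F \<subseteq> {0..<n} \<and> card F = k} - {F. F \<subseteq> S \<and> card F = k}"
    using E(1) unfolding Eout_def by auto
  hence "card Eout \<le> card ({F. F \<subseteq> {0..<n} \<and> card F = k} - {F. F \<subseteq> S \<and> card F = k})"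
    by (rule card_mono[rotated]) (rule finite_Diff, rule finite_subset[of _ "Pow {0..<n}"], auto)
  hence cout: "card Eout \<le> (n choose k) - (s choose k)" using card_out(1)[OF Ssub] s_def by simp
  have sk: "s choose k \<le> n choose k" using card_out(2)[OF Ssub] s_def by simp
  have cout': "real (card Eout) \<le> real (n choose k) - real (s choose k)" using cout sk by linarith
  have Cpos: "real (n choose k) > 0" using kn by simp
  have "lubell n E \<le> real s / real n + (pi_n (kpart k H) s * real (s choose k) + (real (n choose k) - real (s choose k))) / real (n choose k)"
    unfolding lubE l1 l2 l3 using cin cout' Cpos by (simp add: add_divide_distrib[symmetric] divide_right_mono)
  also have "\<dots> = real s / real n + 1 - (1 - pi_n (kpart k H) s) * (real (s choose k) / real (n choose k))"
    using Cpos by (simp add: field_simps)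
  finally show ?thesis using E(4) sn by auto
qed

lemma PiH_lb:
  assumes sn: "s \<le> n" and kn: "k \<le> n"
  shows "real s / real n + 1 - (1 - pi_n (kpart k H) s) * (real (s choose k) / real (n choose k)) \<le> pi_n H n"
proof -
  obtain Es where Es: "Es \<subseteq> Pow {0..<s}" "\<forall>F\<in>Es. card F = k" "\<not> hsub (kpart k H) ({0..<s}, Es)"
     "lubell s Es = pi_n (kpart k H) s" by (rule T_obtain')
  have cEs: "real (card Es) = pi_n (kpart k H) s * real (s choose k)"
  proof (cases "s choose k = 0")
    case True
    hence "s < k" by (simp add: binomial_eq_0_iff)
    have "Es = {}"
    proof (rule ccontr)
      assume "Es \<noteq> {}"
      then obtain F where "F \<in> Es" by auto
      hence "card F = k" "F \<subseteq> {0..<s}" using Es by auto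
      hence "k \<le> s" by (metis card_atLeastLessThan card_mono finite_atLeastLessThan diff_zero)
      thus False using \<open>s < k\<close> by simp
    qed
    thus ?thesis using True by simp
  next
    case False
    thus ?thesis using Es(4) lubell_unif[OF Es(2)] by (simp add: divide_simps)
  qed
  define E1 where "E1 = (\<lambda>v. {v}) ` {0..<s}"
  define Eo where "Eo = {F. F \<subseteq> {0..<n} \<and> card F = k} - {F. F \<subseteq> {0..<s} \<and> card F = k}"
  define E where "E = E1 \<union> Es \<union> Eo"
  have k1: "k \<noteq> 1" using k2 by simp
  have "Pow {0..<s} \<subseteq> Pow {0..<n}" using sn by auto
  hence EsP: "Es \<subseteq> Pow {0..<n}" using Es(1) by (rule_tac subset_trans) auto
  have Epow: "E \<subseteq> Pow {0..<n}" unfolding E_def E1_def Eo_def using EsP sn by auto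
  have Ecard: "\<forall>F\<in>E. card F = 1 \<or> card F = k" unfolding E_def E1_def Eo_def using Es(2) by auto
  have ER: "Rset ({0..<n}, E) \<subseteq> Rset H" using RH Ecard unfolding Rset_def by auto
  have Enh: "\<not> hsub H ({0..<n}, E)"
  proof
    assume "hsub H ({0..<n}, E)"
    then obtain f where f: "inj_on f (fst H)" "f ` fst H \<subseteq> {0..<n}" "\<forall>F\<in>snd H. f ` F \<in> E"
      unfolding hsub_def by auto
    have fs: "f ` fst H \<subseteq> {0..<s}"
    proof
      fix y assume "y \<in> f ` fst H"
      then obtain v where v: "v \<in> fst H" "y = f v" by auto
      have "{f v} \<in> E" using f(3) sing_edge[OF v(1)] by force
      moreover have "{f v} \<notin> Es" using Es(2) k1 by force
      moreover have "{f v} \<notin> Eo" unfolding Eo_def using k1 by auto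
      ultimately have "{f v} \<in> E1" unfolding E_def by auto
      thus "y \<in> {0..<s}" using v unfolding E1_def by auto
    qed
    have "hsub (kpart k H) ({0..<s}, Es)" unfolding hsub_def
    proof (intro exI[of _ f] conjI ballI)
      show "inj_on f (fst (kpart k H))" using f(1) by (simp add: kpart_def)
      show "f ` fst (kpart k H) \<subseteq> fst ({0..<s}, Es)" using fs by (simp add: kpart_def)
      fix F assume F: "F \<in> snd (kpart k H)"
      hence F': "F \<in> snd H" "card F = k" by (auto simp: kpart_def)
      have Fsub: "F \<subseteq> fst H" using edge_sub[OF F'(1)] .
      have cf: "card (f ` F) = k" using F'(2) inj_on_subset[OF f(1) Fsub] by (simp add: card_image)
      have fF: "f ` F \<subseteq> {0..<s}" using fs Fsub by auto
      have "f ` F \<in> E" using f(3) F'(1) by auto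
      moreover have "f ` F \<notin> E1" unfolding E1_def using cf k1 by auto
      moreover have "f ` F \<notin> Eo" unfolding Eo_def using fF by auto
      ultimately show "f ` F \<in> snd ({0..<s}, Es)" unfolding E_def by auto
    qed
    thus False using Es(3) by simp
  qed
  have le: "lubell n E \<le> pi_n H n" by (rule PiH_ge[OF Epow ER Enh])
  have finEo: "finite Eo" unfolding Eo_def by (rule finite_Diff, rule finite_subset[of _ "Pow {0..<n}"]) auto
  have finEs: "finite Es" using Es(1) by (rule finite_subset) auto
  have lubE: "lubell n E = lubell n E1 + lubell n Es + lubell n Eo"
    unfolding E_def lubell_def using finEo finEs k1 Es(1,2)
    by (subst sum.union_disjoint, simp_all add: E1_def, (auto simp: Eo_def)[1],
        subst sum.union_disjoint, auto simp: E1_def Eo_def)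
  have l1: "lubell n E1 = real s / real n"
  proof -
    have "lubell n E1 = real (card E1) / real (n choose 1)"
      by (rule lubell_unif) (simp add: E1_def)
    moreover have "card E1 = s" unfolding E1_def by (subst card_image) (auto simp: inj_on_def)
    ultimately show ?thesis by simp
  qed
  have l2: "lubell n Es = real (card Es) / real (n choose k)" by (rule lubell_unif[OF Es(2)])
  have l3: "lubell n Eo = real (card Eo) / real (n choose k)" by (rule lubell_unif) (simp add: Eo_def)
  have ssub: "{0..<s} \<subseteq> {0..<n}" using sn by auto
  have cEo: "real (card Eo) = real (n choose k) - real (s choose k)"
    using card_out[OF ssub, of k] unfolding Eo_def by (simp add: of_nat_diff)
  have Cpos: "real (n choose k) > 0" using kn by simp
  have "lubell n E = real s / real n + 1 - (1 - pi_n (kpart k H) s) * (real (s choose k) / real (n choose k))"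
    unfolding lubE l1 l2 l3 cEo cEs using Cpos by (simp add: field_simps)
  thus ?thesis using le by simp
qed

end


definition Lval :: "nat \<Rightarrow> real \<Rightarrow> real" where
  "Lval k p = (if p \<ge> 1 - 1 / real k
     then 1 + p
     else 1 + (1 / (real k * (1 - p))) powr (1 / (real k - 1)) * (1 - 1 / real k))"

lemma Lval_max:
  fixes p :: real
  assumes k: "k \<ge> 2" and p: "0 \<le> p" "p \<le> 1"
  shows "\<And>x. 0 \<le> x \<Longrightarrow> x \<le> 1 \<Longrightarrow> 1 + x - (1 - p) * x^k \<le> Lval k p"
    and "\<exists>x0>0. x0 \<le> 1 \<and> 1 + x0 - (1 - p) * x0^k = Lval k p"
proof -
  define c where "c = 1 - p"
  have c: "0 \<le> c" "c \<le> 1" using p by (auto simp: c_def)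
  have kpos: "real k > 0" using k by simp
  have "(\<forall>x. 0 \<le> x \<longrightarrow> x \<le> 1 \<longrightarrow> 1 + x - c * x^k \<le> Lval k p) \<and> (\<exists>x0>0. x0 \<le> 1 \<and> 1 + x0 - c * x0^k = Lval k p)"
  proof (cases "p \<ge> 1 - 1 / real k")
    case True
    hence L: "Lval k p = 1 + p" by (simp add: Lval_def)
    have ck: "c * real k \<le> 1" using True kpos unfolding c_def by (simp add: field_simps)
    have A: "1 + x - c * x^k \<le> Lval k p" if x: "0 \<le> x" "x \<le> 1" for x
    proof -
      have "1 + real k * 1^(k-1) * (x - 1) \<le> x^k" using tangent_pow[of 1 x k] x by simp
      hence "c * (1 + real k * (x - 1)) \<le> c * x^k" using c by (intro mult_left_mono) auto
      moreover have "(c * real k) * (x - 1) \<ge> 1 * (x - 1)"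
        using ck x by (intro mult_right_mono_neg) auto
      ultimately have "c + (x - 1) \<le> c * x^k" by (simp add: algebra_simps)
      thus ?thesis unfolding L c_def by simp
    qed
    have B: "1 + 1 - c * 1^k = Lval k p" unfolding L c_def by simp
    show ?thesis using A B by (intro conjI allI impI exI[of _ 1]) auto
  next
    case False
    hence L: "Lval k p = 1 + (1 / (real k * c)) powr (1 / (real k - 1)) * (1 - 1 / real k)"
      by (simp add: Lval_def c_def)
    have ck: "c * real k > 1" using False kpos unfolding c_def by (simp add: field_simps)
    define y where "y = 1 / (real k * c)"
    have y: "0 < y" "y < 1" using ck by (auto simp: y_def field_simps)
    define x0 where "x0 = y powr (1 / (real k - 1))"
    have x0pos: "x0 > 0" using y by (simp add: x0_def)
    have km: "real k - 1 = real (k - 1)" using k by (simp add: of_nat_diff)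
    have x0pow: "x0^(k-1) = y"
    proof -
      have "x0^(k-1) = x0 powr real (k-1)" using x0pos by (simp add: powr_realpow)
      also have "\<dots> = y powr (1 / (real k - 1) * real (k - 1))" unfolding x0_def by (simp add: powr_powr)
      also have "1 / (real k - 1) * real (k - 1) = 1" using k km by simp
      finally show ?thesis using y by simp
    qed
    have x01: "x0 < 1"
    proof (rule power_less_imp_less_base[of x0 "k-1"])
      show "x0^(k-1) < 1^(k-1)" using x0pow y by simp
    qed simp
    have c0: "c \<noteq> 0" using ck by auto
    have ckx: "c * real k * x0^(k-1) = 1" using x0pow ck c0 kpos unfolding y_def by simp
    have powk: "x0^k = x0 * x0^(k-1)" using k by (metis Suc_diff_1 less_le_trans pos2 power_Suc zero_less_iff_neq_zero)
    have fx0: "1 + x0 - c * x0^k = Lval k p"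
    proof -
      have "c * x0^k = x0 / real k" using ckx kpos unfolding powk by (simp add: field_simps)
      thus ?thesis unfolding L y_def[symmetric] x0_def[symmetric] by (simp add: algebra_simps)
    qed
    have A: "1 + x - c * x^k \<le> Lval k p" if x: "0 \<le> x" "x \<le> 1" for x
    proof -
      have "x0^k + real k * x0^(k-1) * (x - x0) \<le> x^k" using tangent_pow[OF x0pos x(1)] .
      hence "c * (x0^k + real k * x0^(k-1) * (x - x0)) \<le> c * x^k" using c by (intro mult_left_mono) auto
      moreover have "c * (x0^k + real k * x0^(k-1) * (x - x0)) = c * x0^k + (c * real k * x0^(k-1)) * (x - x0)"
        by (simp add: algebra_simps)
      ultimately have "c * x0^k + (x - x0) \<le> c * x^k" using ckx by simp
      thus ?thesis using fx0 by simp
    qed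
    show ?thesis using A fx0 x0pos x01 by (intro conjI allI impI exI[of _ x0]) auto
  qed
  thus "\<And>x. 0 \<le> x \<Longrightarrow> x \<le> 1 \<Longrightarrow> 1 + x - (1 - p) * x^k \<le> Lval k p"
    and "\<exists>x0>0. x0 \<le> 1 \<and> 1 + x0 - (1 - p) * x0^k = Lval k p" unfolding c_def by auto
qed



theorem mainTheorem6:
  fixes H :: "'a hypergraph" and k :: nat
  assumes "k \<ge> 2"
    and "hypergraph H"
    and "Rset H = {1, k}"
    and "{F \<in> snd H. card F = 1} = (\<lambda>v. {v}) ` fst H"
  shows "pi_n H \<longlonglongrightarrow>
    (if pi_dens (kpart k H) \<ge> 1 - 1 / real k
     then 1 + pi_dens (kpart k H)
     else 1 + (1 / (real k * (1 - pi_dens (kpart k H)))) powr (1 / (real k - 1))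
              * (1 - 1 / real k))"
proof -
  note k2 = assms(1) and hg = assms(2) and RH = assms(3) and sing = assms(4)
  define T where "T = pi_n (kpart k H)"
  define p where "p = pi_dens (kpart k H)"
  define L where "L = Lval k p"
  have Tc: "T \<longlonglongrightarrow> p" unfolding T_def p_def by (rule T_conv[OF k2 hg RH])
  have T01: "\<And>n. 0 \<le> T n" "\<And>n. T n \<le> 1" unfolding T_def
    using T_nonneg[OF k2 hg RH] T_le1[OF k2 hg RH] by auto
  have p01: "0 \<le> p" "p \<le> 1"
    using LIMSEQ_le_const[OF Tc, of 0] LIMSEQ_le_const2[OF Tc, of 1] T01 by auto
  have fmax: "\<And>x. 0 \<le> x \<Longrightarrow> x \<le> 1 \<Longrightarrow> 1 + x - (1 - p) * x^k \<le> L"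
    unfolding L_def using Lval_max(1)[OF k2 p01] by blast
  obtain x0 where x0: "x0 > 0" "x0 \<le> 1" "1 + x0 - (1 - p) * x0^k = L"
    unfolding L_def using Lval_max(2)[OF k2 p01] by blast
  have L1: "1 \<le> L" using fmax[of 0] k2 by (simp add: power_0_left)
  have ub: "\<And>n. k \<le> n \<Longrightarrow> \<exists>s\<le>n. pi_n H n \<le> real s / real n + 1 - (1 - T s) * (real (s choose k) / real (n choose k))"
    unfolding T_def by (rule PiH_ub[OF k2 hg RH sing])
  have lb: "\<And>s n. s \<le> n \<Longrightarrow> k \<le> n \<Longrightarrow> real s / real n + 1 - (1 - T s) * (real (s choose k) / real (n choose k)) \<le> pi_n H n"
    unfolding T_def by (rule PiH_lb[OF k2 hg RH sing])
  have k1: "k \<ge> 1" using k2 by simp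
  have "pi_n H \<longlonglongrightarrow> L"
  proof (rule order_tendstoI)
    fix a assume a: "a < L"
    define sq where "sq n = nat \<lfloor>x0 * real n\<rfloor>" for n
    have sq_real: "real (sq n) = of_int \<lfloor>x0 * real n\<rfloor>" for n
      unfolding sq_def using x0(1) by simp
    have sq_le: "real (sq n) \<le> x0 * real n" for n unfolding sq_real by simp
    have sq_ge: "x0 * real n - 1 \<le> real (sq n)" for n unfolding sq_real by linarith
    have sqn: "sq n \<le> n" for n
    proof -
      have "real (sq n) \<le> real n" using sq_le[of n] x0(2) mult_right_mono[of x0 1 "real n"] by simp
      thus ?thesis by simp
    qed
    have sq_top: "filterlim sq at_top sequentially"
      unfolding filterlim_at_top
    proof
      fix Z :: nat
      show "eventually (\<lambda>n. Z \<le> sq n) sequentially"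
        unfolding eventually_sequentially
      proof (intro exI[of _ "nat \<lceil>(real Z + 1) / x0\<rceil>"] allI impI)
        fix n assume "nat \<lceil>(real Z + 1) / x0\<rceil> \<le> n"
        hence "(real Z + 1) / x0 \<le> real n" by linarith
        hence "real Z + 1 \<le> x0 * real n" using x0(1) by (simp add: field_simps)
        hence "real Z \<le> real (sq n)" using sq_ge[of n] by linarith
        thus "Z \<le> sq n" by simp
      qed
    qed
    have Tsq: "(\<lambda>n. T (sq n)) \<longlonglongrightarrow> p" by (rule filterlim_compose[OF Tc sq_top])
    have ratio: "(\<lambda>n. real (sq n) / real n) \<longlonglongrightarrow> x0"
    proof (rule tendsto_sandwich[of "\<lambda>n. x0 - 1 / real n" _ _ "\<lambda>n. x0"])
      show "eventually (\<lambda>n. x0 - 1 / real n \<le> real (sq n) / real n) sequentially"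
        unfolding eventually_sequentially
      proof (intro exI[of _ 1] allI impI)
        fix n :: nat assume "1 \<le> n"
        hence "x0 - 1 / real n = (x0 * real n - 1) / real n" by (simp add: field_simps)
        also have "\<dots> \<le> real (sq n) / real n" using sq_ge[of n] by (intro divide_right_mono) auto
        finally show "x0 - 1 / real n \<le> real (sq n) / real n" .
      qed
      show "eventually (\<lambda>n. real (sq n) / real n \<le> x0) sequentially"
        unfolding eventually_sequentially
      proof (intro exI[of _ 1] allI impI)
        fix n :: nat assume "1 \<le> n"
        thus "real (sq n) / real n \<le> x0" using sq_le[of n] by (simp add: pos_divide_le_eq mult.commute)
      qed
      show "(\<lambda>n. x0 - 1 / real n) \<longlonglongrightarrow> x0"
        using tendsto_diff[OF tendsto_const lim_const_over_n[of "1::real"]] by simp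
    qed simp
    define b where "b n = real (sq n) / real n + 1 - (1 - T (sq n)) * (real (sq n) / real n)^k" for n
    have "b \<longlonglongrightarrow> x0 + 1 - (1 - p) * x0^k" unfolding b_def
      by (intro tendsto_intros ratio Tsq)
    moreover have "x0 + 1 - (1 - p) * x0^k = L" using x0(3) by simp
    ultimately have "b \<longlonglongrightarrow> L" by simp
    hence ev1: "eventually (\<lambda>n. a < b n) sequentially" using a by (rule order_tendstoD)
    have ev2: "eventually (\<lambda>n. b n \<le> pi_n H n) sequentially"
      unfolding eventually_sequentially
    proof (intro exI[of _ k] allI impI)
      fix n assume kn: "k \<le> n"
      have r: "real (sq n choose k) / real (n choose k) \<le> (real (sq n) / real n)^k"
        by (rule binom_ratio(2)[OF sqn kn k1])
      have "(1 - T (sq n)) * (real (sq n choose k) / real (n choose k)) \<le> (1 - T (sq n)) * (real (sq n) / real n)^k"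
        using T01 r by (intro mult_left_mono) auto
      thus "b n \<le> pi_n H n" using lb[OF sqn kn] unfolding b_def by linarith
    qed
    show "eventually (\<lambda>n. a < pi_n H n) sequentially"
      using ev1 ev2 by eventually_elim simp
  next
    fix a assume a: "L < a"
    define e where "e = a - L"
    have e: "e > 0" using a by (simp add: e_def)
    have "eventually (\<lambda>m. T m < p + e / 4) sequentially"
      using Tc e by (intro order_tendstoD) auto
    then obtain N0 where N0: "\<And>m. m \<ge> N0 \<Longrightarrow> T m < p + e / 4"
      unfolding eventually_sequentially by blast
    define M where "M = real N0 + real k * real k"
    show "eventually (\<lambda>n. pi_n H n < a) sequentially"
      unfolding eventually_sequentially
    proof (intro exI[of _ "max k (nat \<lceil>4 * M / e\<rceil> + 1)"] allI impI)
      fix n assume n: "max k (nat \<lceil>4 * M / e\<rceil> + 1) \<le> n"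
      hence kn: "k \<le> n" by simp
      have npos: "real n > 0" using kn k1 by simp
      have "4 * M / e < real n" using n by linarith
      hence nM: "4 * M < e * real n" using e by (simp add: field_simps)
      have M0: "real N0 / real n < e / 4" "real k * real k / real n < e / 4"
      proof -
        have kk: "0 \<le> real k * real k" by simp
        have N00: "0 \<le> real N0" by simp
        have a1: "4 * real N0 \<le> 4 * M" using kk unfolding M_def by simp
        have a2: "4 * (real k * real k) \<le> 4 * M" using N00 unfolding M_def by simp
        have b1: "4 * real N0 < e * real n" using le_less_trans[OF a1 nM] .
        have b2: "4 * (real k * real k) < e * real n" using le_less_trans[OF a2 nM] .
        from b1 b2 show "real N0 / real n < e / 4" "real k * real k / real n < e / 4"
          using npos by (simp_all add: field_simps)
      qed
      obtain s where s: "s \<le> n" and g: "pi_n H n \<le> real s / real n + 1 - (1 - T s) * (real (s choose k) / real (n choose k))"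
        using ub[OF kn] by blast
      define r where "r = real (s choose k) / real (n choose k)"
      define x where "x = real s / real n"
      have r0: "0 \<le> r" unfolding r_def by simp
      have rx: "x^k - real k * real k / real n \<le> r" unfolding r_def x_def by (rule binom_ratio(3)[OF s kn k1])
      have x01: "0 \<le> x" "x \<le> 1" unfolding x_def using s npos by auto
      show "pi_n H n < a"
      proof (cases "s < N0")
        case True
        have "(1 - T s) * r \<ge> 0" using T01 r0 by simp
        hence "pi_n H n \<le> x + 1" using g unfolding r_def x_def by linarith
        moreover have "x \<le> real N0 / real n" unfolding x_def using True npos by (simp add: divide_right_mono)
        ultimately show ?thesis using M0 L1 e_def e by linarith
      next
        case False
        have Ts: "T s \<le> p + e / 4" using N0[of s] False by simp
        have h1: "(1 - p - e / 4) * r \<le> (1 - T s) * r" using Ts r0 by (intro mult_right_mono) auto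
        have h1': "(1 - p) * r - (e / 4) * r \<le> (1 - T s) * r" using h1 by (simp add: left_diff_distrib)
        have h2: "(1 - p) * (x^k - real k * real k / real n) \<le> (1 - p) * r"
          using rx p01 by (intro mult_left_mono) auto
        have h2': "(1 - p) * x^k - (1 - p) * (real k * real k / real n) \<le> (1 - p) * r"
          using h2 by (simp add: right_diff_distrib)
        have r1: "r \<le> 1"
        proof -
          have "x^k \<le> 1" using x01 by (simp add: power_le_one)
          thus ?thesis using binom_ratio(2)[OF s kn k1] unfolding r_def x_def by linarith
        qed
        have h3: "(e / 4) * r \<le> e / 4" using r1 e r0 by (intro mult_right_le_one_le) auto
        have h4: "(1 - p) * (real k * real k / real n) \<le> real k * real k / real n"
          using p01 npos by (intro mult_left_le_one_le) auto
        have g': "pi_n H n \<le> x + 1 - (1 - T s) * r" using g unfolding r_def x_def .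
        have "pi_n H n \<le> 1 + x - (1 - p) * x^k + e / 4 + real k * real k / real n"
          using g' h1' h2' h3 h4 by linarith
        thus ?thesis using fmax[OF x01] M0 e_def e by linarith
      qed
    qed
  qed
  thus ?thesis unfolding L_def p_def Lval_def .
qed


end
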